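(* Let $n \ge 3$ be an integer and let $I$ be a degree-based topological index with coefficients $c_{12},c_{13},c_{22},c_{23},c_{33}$. Define $c'_{12} = c_{12}-4c_{22}+3c_{23}$, $c'_{13} = c_{13}-3c_{22}+2c_{23}$, $c'_{33} = c_{22}-2c_{23}+c_{33}$. If $\max\{0,-c'_{33}\}<\min\{c'_{12},c'_{13}\}$, then the cycle $C_n$ on $n$ vertices is, up to isomorphism, the only graph in $\mathcal{G}_3(n,n)$ that minimizes $I$.
   Context: For integers $n,m$, $\mathcal{G}_3(n,m)$ denotes the set of simple connected undirected graphs (chemical graphs) with $n$ vertices, $m$ edges and maximum degree at most $3$; in particular $\mathcal{G}_3(n,n)$ is the set of connected unicyclic graphs of order $n$ with maximum degree at most $3$. For a graph $G$ and $1\le i\le j$, an $ij$-edge is an edge whose endpoints have degrees $i$ and $j$, and $m_{ij}$ denotes the number of $ij$-edges of $G$. A degree-based topological index $I$ is a function on chemical graphs of order $n\ge 3$ of the form $I(G)=c_{12}m_{12}+c_{13}m_{13}+c_{22}m_{22}+c_{23}m_{23}+c_{33}m_{33}$, where the $c_{ij}$ are fixed real numbers. *)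

theory Defs
  imports Complex_Main
begin

text \<open>Graphs on the vertex set {0..<n}, given by their edge set (a set of 2-element sets).\<close>

definition simple_graph :: "nat \<Rightarrow> nat set set \<Rightarrow> bool" where
  "simple_graph n E \<longleftrightarrow> (\<forall>e\<in>E. \<exists>u v. u \<noteq> v \<and> u < n \<and> v < n \<and> e = {u, v})"

definition vdeg :: "nat set set \<Rightarrow> nat \<Rightarrow> nat" where
  "vdeg E v = card {e\<in>E. v \<in> e}"

definition adj_rel :: "nat set set \<Rightarrow> (nat \<times> nat) set" where
  "adj_rel E = {(u, v). {u, v} \<in> E}"

definition graph_connected :: "nat \<Rightarrow> nat set set \<Rightarrow> bool" where
  "graph_connected n E \<longleftrightarrow> (\<forall>u<n. \<forall>v<n. (u, v) \<in> (adj_rel E)\<^sup>*)"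

definition G3 :: "nat \<Rightarrow> nat \<Rightarrow> nat set set set" where
  "G3 n m = {E. simple_graph n E \<and> graph_connected n E \<and> card E = m \<and> (\<forall>v<n. vdeg E v \<le> 3)}"

definition medges :: "nat set set \<Rightarrow> nat \<Rightarrow> nat \<Rightarrow> nat" where
  "medges E i j = card {e\<in>E. \<exists>u v. u \<noteq> v \<and> e = {u, v} \<and> vdeg E u = i \<and> vdeg E v = j}"

definition deg_index :: "real \<Rightarrow> real \<Rightarrow> real \<Rightarrow> real \<Rightarrow> real \<Rightarrow> nat set set \<Rightarrow> real" where
  "deg_index c12 c13 c22 c23 c33 E =
     c12 * medges E 1 2 + c13 * medges E 1 3 + c22 * medges E 2 2 + c23 * medges E 2 3 + c33 * medges E 3 3"

definition cycle_graph :: "nat \<Rightarrow> nat set set" where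
  "cycle_graph n = {{i, (i + 1) mod n} | i. i < n}"

definition graph_iso :: "nat \<Rightarrow> nat set set \<Rightarrow> nat set set \<Rightarrow> bool" where
  "graph_iso n E F \<longleftrightarrow> (\<exists>f. bij_betw f {0..<n} {0..<n} \<and>
      (\<forall>u<n. \<forall>v<n. {u, v} \<in> E \<longleftrightarrow> {f u, f v} \<in> F))"

end

theory Submission
  imports Defs
begin


lemma card_filter_sum: "finite A \<Longrightarrow> card {x\<in>A. P x} = (\<Sum>x\<in>A. if P x then 1 else 0)"
  by (simp add: sum.inter_filter[symmetric])

lemma double_count:
  assumes "finite A" "finite E"
  shows "(\<Sum>v\<in>A. card {e\<in>E. v \<in> e}) = (\<Sum>e\<in>E. card {v\<in>A. v \<in> e})"
proof -
  have "(\<Sum>v\<in>A. card {e\<in>E. v \<in> e}) = (\<Sum>v\<in>A. \<Sum>e\<in>E. if v \<in> e then 1 else 0)"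
    using assms by (simp add: card_filter_sum)
  also have "\<dots> = (\<Sum>e\<in>E. \<Sum>v\<in>A. if v \<in> e then 1 else 0)" by (rule sum.swap)
  also have "\<dots> = (\<Sum>e\<in>E. card {v\<in>A. v \<in> e})"
    using assms by (simp add: card_filter_sum)
  finally show ?thesis .
qed

lemma distlem:
  fixes R :: "('a \<times> 'a) set"
  assumes "(v, r) \<in> R\<^sup>*" "v \<noteq> r"
  shows "\<exists>y. (v, y) \<in> R \<and> (LEAST k. (y, r) \<in> R ^^ k) < (LEAST k. (v, r) \<in> R ^^ k)"
proof -
  define d where "d x = (LEAST k. (x, r) \<in> R ^^ k)" for x
  obtain k where "(v, r) \<in> R ^^ k" using rtrancl_imp_relpow[OF assms(1)] by (elim exE)
  hence dv: "(v, r) \<in> R ^^ d v" unfolding d_def by (rule LeastI)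
  have "d v \<noteq> 0"
  proof
    assume "d v = 0"
    with dv have "(v, r) \<in> Id" by simp
    with assms(2) show False by simp
  qed
  then obtain k where k: "d v = Suc k" using not0_implies_Suc by blast
  from dv have dS: "(v, r) \<in> R ^^ Suc k" unfolding k .
  obtain y where y: "(v, y) \<in> R" "(y, r) \<in> R ^^ k" using relpow_Suc_D2[OF dS] by (elim exE conjE)
  have "d y \<le> k" unfolding d_def using y(2) by (rule Least_le)
  hence "d y < d v" using k by simp
  with y(1) show ?thesis unfolding d_def by blast
qed

lemma tree_bound:
  fixes F :: "nat set set"
  assumes fin: "finite V" and r: "r \<in> V"
    and two: "\<forall>e\<in>F. card e = 2" and finF: "finite F"
    and conn: "\<forall>v\<in>V. (v, r) \<in> (adj_rel F)\<^sup>*"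
  shows "card V \<le> card F + 1"
proof -
  let ?R = "adj_rel F"
  define dist where "dist v = (LEAST k. (v, r) \<in> ?R ^^ k)" for v
  have ex: "\<exists>y. (v, y) \<in> ?R \<and> dist y < dist v" if "v \<in> V" "v \<noteq> r" for v
    unfolding dist_def by (rule distlem) (use conn that in auto)
  have "\<forall>v\<in>V - {r}. \<exists>y. (v, y) \<in> ?R \<and> dist y < dist v" using ex by blast
  then obtain h where h0: "\<forall>v\<in>V - {r}. (v, h v) \<in> ?R \<and> dist (h v) < dist v"
    by (rule bchoice[THEN exE])
  hence h: "\<And>v. v \<in> V - {r} \<Longrightarrow> (v, h v) \<in> ?R \<and> dist (h v) < dist v" by blast
  define g where "g v = {v, h v}" for v
  have gF: "g v \<in> F" if "v \<in> V - {r}" for v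
    using h[OF that] unfolding g_def adj_rel_def by simp
  have inj: "inj_on g (V - {r})"
  proof (rule inj_onI)
    fix v w assume v: "v \<in> V - {r}" and w: "w \<in> V - {r}" and eq: "g v = g w"
    show "v = w"
    proof (rule ccontr)
      assume "v \<noteq> w"
      with eq have "h w = v \<and> h v = w"
        unfolding g_def doubleton_eq_iff by blast
      hence e1: "h w = v" and e2: "h v = w" by blast+
      have "dist (h w) < dist w" "dist (h v) < dist v" using h[OF v] h[OF w] by blast+
      hence "dist v < dist w" "dist w < dist v" unfolding e1 e2 .
      thus False by linarith
    qed
  qed
  have "g ` (V - {r}) \<subseteq> F" using gF by auto
  hence "card (g ` (V - {r})) \<le> card F" using finF by (rule card_mono[rotated])
  hence "card (V - {r}) \<le> card F" using card_image[OF inj] by simp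
  moreover have "card V = card (V - {r}) + 1"
  proof -
    have "card V > 0" using fin r by (auto simp: card_gt_0_iff)
    moreover have "card (V - {r}) = card V - 1" using r fin by (simp add: card_Diff_singleton)
    ultimately show ?thesis by linarith
  qed
  ultimately show ?thesis by simp
qed



locale ug =
  fixes n :: nat and E :: "nat set set"
  assumes n3: "n \<ge> 3" and simple: "simple_graph n E" and conn: "graph_connected n E"
    and cardE: "card E = n" and maxdeg: "\<forall>v<n. vdeg E v \<le> 3"
begin

abbreviation "deg \<equiv> vdeg E"
definition S :: "nat \<Rightarrow> nat set" where "S i = {v. v < n \<and> deg v = i}"
definition T :: "nat \<Rightarrow> nat \<Rightarrow> nat set set" where
  "T i j = {e\<in>E. \<exists>u v. u \<noteq> v \<and> e = {u, v} \<and> deg u = i \<and> deg v = j}"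
definition ind :: "nat \<Rightarrow> nat \<Rightarrow> nat set \<Rightarrow> nat" where
  "ind i j e = (if e \<in> T i j then 1 else 0)"

lemma finE: "finite E" by (rule card_ge_0_finite) (use cardE n3 in simp)

lemma edge: "e \<in> E \<Longrightarrow> \<exists>u v. u \<noteq> v \<and> u < n \<and> v < n \<and> e = {u, v}"
  using simple unfolding simple_graph_def by blast

lemma adj: "(u, v) \<in> adj_rel E \<longleftrightarrow> {u, v} \<in> E" unfolding adj_rel_def by simp

lemma adj_sym: "(u, v) \<in> adj_rel E \<Longrightarrow> (v, u) \<in> adj_rel E"
  unfolding adj_rel_def by (simp add: insert_commute)

lemma reach: assumes "u < n" "v < n" shows "(u, v) \<in> (adj_rel E)\<^sup>*"
  using conn[unfolded graph_connected_def, rule_format, OF assms] .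

lemma edge_ne: assumes "{u, v} \<in> E" shows "u \<noteq> v"
proof -
  obtain a b where ab: "a \<noteq> b" "{u, v} = {a, b}" using edge[OF assms] by blast
  thus ?thesis by (auto simp: doubleton_eq_iff)
qed

lemma edge_lt: assumes "{u, v} \<in> E" shows "u < n \<and> v < n"
proof -
  obtain a b where ab: "a < n" "b < n" "{u, v} = {a, b}" using edge[OF assms] by blast
  thus ?thesis by (auto simp: doubleton_eq_iff)
qed

lemma deg_pos: assumes "v < n" shows "deg v \<ge> 1"
proof -
  define w where "w = (if v = 0 then 1 else (0::nat))"
  have w: "w < n" "w \<noteq> v" using n3 assms unfolding w_def by auto
  have vw: "(v, w) \<in> (adj_rel E)\<^sup>*" using reach[OF assms w(1)] .
  have "\<exists>y. (v, y) \<in> adj_rel E"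
    using vw
  proof (cases rule: converse_rtranclE)
    case base thus ?thesis using w(2) by simp
  next
    case (step y) thus ?thesis by (intro exI)
  qed
  then obtain y where "(v, y) \<in> adj_rel E" by (elim exE)
  hence "{v, y} \<in> {e\<in>E. v \<in> e}" by (simp add: adj)
  moreover have "finite {e\<in>E. v \<in> e}" using finE by simp
  ultimately have "card {e\<in>E. v \<in> e} > 0" by (auto simp: card_gt_0_iff)
  thus ?thesis unfolding vdeg_def by simp
qed

lemma deg_cases: "v < n \<Longrightarrow> deg v = 1 \<or> deg v = 2 \<or> deg v = 3"
proof -
  assume v: "v < n"
  have "deg v \<ge> 1" "deg v \<le> 3" using deg_pos[OF v] maxdeg v by auto
  thus ?thesis by linarith
qed

lemma nine:
  fixes a b :: nat
  assumes "a = 1 \<or> a = 2 \<or> a = 3" "b = 1 \<or> b = 2 \<or> b = 3"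
  defines "I \<equiv> \<lambda>i j. (if (a = i \<and> b = j) \<or> (a = j \<and> b = i) then 1 else 0::nat)"
  defines "C \<equiv> \<lambda>i. (if a = i then 1 else 0) + (if b = i then 1 else (0::nat))"
  shows "C 1 = 2 * I 1 1 + I 1 2 + I 1 3 \<and> C 2 = I 1 2 + 2 * I 2 2 + I 2 3 \<and>
    C 3 = I 1 3 + I 2 3 + 2 * I 3 3 \<and> 1 = I 1 1 + I 1 2 + I 1 3 + I 2 2 + I 2 3 + I 3 3"
  using assms(1,2) unfolding I_def C_def by (elim disjE) simp_all

lemma T_iff:
  assumes "e \<in> E" "e = {u, v}" "u \<noteq> v"
  shows "e \<in> T i j \<longleftrightarrow> (deg u = i \<and> deg v = j) \<or> (deg u = j \<and> deg v = i)"
proof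
  assume "e \<in> T i j"
  then obtain a b where ab: "a \<noteq> b" "e = {a, b}" "deg a = i" "deg b = j" unfolding T_def by blast
  with assms have "(a = u \<and> b = v) \<or> (a = v \<and> b = u)" by (simp add: doubleton_eq_iff)
  with ab show "(deg u = i \<and> deg v = j) \<or> (deg u = j \<and> deg v = i)" by blast
next
  assume "(deg u = i \<and> deg v = j) \<or> (deg u = j \<and> deg v = i)"
  thus "e \<in> T i j"
  proof (elim disjE)
    assume h: "deg u = i \<and> deg v = j"
    have "\<exists>a b. a \<noteq> b \<and> e = {a, b} \<and> deg a = i \<and> deg b = j"
      using assms h by (intro exI[of _ u] exI[of _ v]) simp
    thus ?thesis using assms(1) unfolding T_def by simp
  next
    assume h: "deg u = j \<and> deg v = i"
    have "e = {v, u}" using assms by (simp add: insert_commute)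
    hence "\<exists>a b. a \<noteq> b \<and> e = {a, b} \<and> deg a = i \<and> deg b = j"
      using assms h by (intro exI[of _ v] exI[of _ u]) simp
    thus ?thesis using assms(1) unfolding T_def by simp
  qed
qed

lemma card_T: "card (T i j) = (\<Sum>e\<in>E. ind i j e)"
proof -
  have "T i j = {e\<in>E. e \<in> T i j}" unfolding T_def by auto
  hence "card (T i j) = card {e\<in>E. e \<in> T i j}" by simp
  also have "\<dots> = (\<Sum>e\<in>E. ind i j e)" using finE unfolding ind_def by (simp add: card_filter_sum)
  finally show ?thesis .
qed

lemma medges_T: "medges E i j = card (T i j)" unfolding medges_def T_def by simp

lemma per_edge:
  assumes "e \<in> E"
  shows "card {v\<in>S 1. v \<in> e} = 2 * ind 1 1 e + ind 1 2 e + ind 1 3 e"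
    and "card {v\<in>S 2. v \<in> e} = ind 1 2 e + 2 * ind 2 2 e + ind 2 3 e"
    and "card {v\<in>S 3. v \<in> e} = ind 1 3 e + ind 2 3 e + 2 * ind 3 3 e"
    and "1 = ind 1 1 e + ind 1 2 e + ind 1 3 e + ind 2 2 e + ind 2 3 e + ind 3 3 e"
proof -
  obtain u v where uv: "u \<noteq> v" "u < n" "v < n" "e = {u, v}" using edge assms by blast
  have c: "card {x\<in>S i. x \<in> e} = (if deg u = i then 1 else 0) + (if deg v = i then 1 else 0)" for i
  proof -
    have "{x\<in>S i. x \<in> e} = (if deg u = i then {u} else {}) \<union> (if deg v = i then {v} else {})"
      using uv unfolding S_def by auto
    thus ?thesis using uv by auto
  qed
  have t: "ind i j e = (if (deg u = i \<and> deg v = j) \<or> (deg u = j \<and> deg v = i) then 1 else 0)" for i j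
    unfolding ind_def using T_iff[OF assms uv(4,1)] by simp
  have du: "deg u = 1 \<or> deg u = 2 \<or> deg u = 3" and dv: "deg v = 1 \<or> deg v = 2 \<or> deg v = 3"
    using deg_cases uv by auto
  show "card {v\<in>S 1. v \<in> e} = 2 * ind 1 1 e + ind 1 2 e + ind 1 3 e"
    "card {v\<in>S 2. v \<in> e} = ind 1 2 e + 2 * ind 2 2 e + ind 2 3 e"
    "card {v\<in>S 3. v \<in> e} = ind 1 3 e + ind 2 3 e + 2 * ind 3 3 e"
    "1 = ind 1 1 e + ind 1 2 e + ind 1 3 e + ind 2 2 e + ind 2 3 e + ind 3 3 e"
    unfolding c t using nine[OF du dv] by simp_all
qed

lemma finS: "finite (S i)" unfolding S_def by simp

lemma degsum: "i * card (S i) = (\<Sum>e\<in>E. card {v\<in>S i. v \<in> e})"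
proof -
  have "(\<Sum>v\<in>S i. deg v) = i * card (S i)" unfolding S_def by simp
  moreover have "(\<Sum>v\<in>S i. deg v) = (\<Sum>e\<in>E. card {v\<in>S i. v \<in> e})"
    unfolding vdeg_def by (rule double_count[OF finS finE])
  ultimately show ?thesis by simp
qed

definition "m i j = card (T i j)"

lemma eq1: "card (S 1) = 2 * m 1 1 + m 1 2 + m 1 3"
proof -
  have "card (S 1) = (\<Sum>e\<in>E. 2 * ind 1 1 e + ind 1 2 e + ind 1 3 e)"
    using degsum[of 1] per_edge(1) by simp
  thus ?thesis unfolding m_def card_T by (simp add: sum.distrib sum_distrib_left)
qed

lemma eq2: "2 * card (S 2) = m 1 2 + 2 * m 2 2 + m 2 3"
proof -
  have "2 * card (S 2) = (\<Sum>e\<in>E. ind 1 2 e + 2 * ind 2 2 e + ind 2 3 e)"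
    using degsum[of 2] per_edge(2) by simp
  thus ?thesis unfolding m_def card_T by (simp add: sum.distrib sum_distrib_left)
qed

lemma eq3: "3 * card (S 3) = m 1 3 + m 2 3 + 2 * m 3 3"
proof -
  have "3 * card (S 3) = (\<Sum>e\<in>E. ind 1 3 e + ind 2 3 e + 2 * ind 3 3 e)"
    using degsum[of 3] per_edge(3) by simp
  thus ?thesis unfolding m_def card_T by (simp add: sum.distrib sum_distrib_left)
qed

lemma eq0: "n = m 1 1 + m 1 2 + m 1 3 + m 2 2 + m 2 3 + m 3 3"
proof -
  have "n = (\<Sum>e\<in>E. 1)" using cardE by simp
  also have "\<dots> = (\<Sum>e\<in>E. ind 1 1 e + ind 1 2 e + ind 1 3 e + ind 2 2 e + ind 2 3 e + ind 3 3 e)"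
    using per_edge(4) by (intro sum.cong) auto
  finally show ?thesis unfolding m_def card_T by (simp add: sum.distrib)
qed

lemma eqV: "n = card (S 1) + card (S 2) + card (S 3)"
proof -
  have "{0..<n} = S 1 \<union> S 2 \<union> S 3"
  proof (intro equalityI subsetI)
    fix x assume "x \<in> {0..<n}"
    hence "x < n" by simp
    from deg_cases[OF this] this show "x \<in> S 1 \<union> S 2 \<union> S 3" unfolding S_def by blast
  qed (auto simp: S_def)
  hence "n = card (S 1 \<union> S 2 \<union> S 3)" by (metis card_atLeastLessThan diff_zero)
  also have "\<dots> = card (S 1) + card (S 2) + card (S 3)"
  proof -
    have d1: "S 1 \<inter> S 2 = {}" "(S 1 \<union> S 2) \<inter> S 3 = {}" unfolding S_def by auto
    have "card (S 1 \<union> S 2 \<union> S 3) = card (S 1 \<union> S 2) + card (S 3)"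
      using d1(2) finS by (simp add: card_Un_disjoint)
    also have "card (S 1 \<union> S 2) = card (S 1) + card (S 2)"
      using d1(1) finS by (simp add: card_Un_disjoint)
    finally show ?thesis .
  qed
  finally show ?thesis .
qed

end


context ug begin

lemma deg1_unique:
  assumes "deg x = 1" "e \<in> E" "x \<in> e" "e' \<in> E" "x \<in> e'"
  shows "e' = e"
proof -
  have "card {f\<in>E. x \<in> f} = 1" using assms(1) unfolding vdeg_def .
  then obtain a where a: "{f\<in>E. x \<in> f} = {a}" by (rule card_1_singletonE)
  have "e \<in> {a}" "e' \<in> {a}" using assms(2-5) unfolding a[symmetric] by simp_all
  thus ?thesis by simp
qed

lemma m11: "m 1 1 = 0"
proof (rule ccontr)
  assume "m 1 1 \<noteq> 0"
  hence "T 1 1 \<noteq> {}" unfolding m_def by (metis card.empty)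
  then obtain e where e: "e \<in> T 1 1" by (meson ex_in_conv)
  then obtain u v where uv: "u \<noteq> v" "e = {u, v}" "deg u = 1" "deg v = 1" and eE: "e \<in> E"
    unfolding T_def by auto
  have closed: "w \<in> e" if "(u, w) \<in> (adj_rel E)\<^sup>*" for w
    using that
  proof (induction rule: rtrancl_induct)
    case base thus ?case using uv by simp
  next
    case (step y z)
    have yz: "{y, z} \<in> E" using step(2) by (simp add: adj)
    have dy: "deg y = 1" using step(3) uv by auto
    have "{y, z} = e" by (rule deg1_unique[OF dy eE step(3) yz]) simp
    thus ?case by auto
  qed
  have un: "u < n" using eE uv edge_lt by simp
  have "{0..<n} \<subseteq> e"
  proof
    fix w assume "w \<in> {0..<n}"
    hence "w < n" by simp
    thus "w \<in> e" using closed reach[OF un] by simp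
  qed
  hence "card {0..<n} \<le> card e" by (rule card_mono[rotated]) (simp add: uv)
  moreover have "card e = 2" using uv by simp
  ultimately show False using n3 by simp
qed

lemma m33: "m 3 3 \<le> card (S 3)"
proof (cases "S 3 = {}")
  case True
  have "T 3 3 = {}"
  proof (rule ccontr)
    assume "T 3 3 \<noteq> {}"
    then obtain e where "e \<in> T 3 3" by (meson ex_in_conv)
    then obtain a b where ab: "e = {a, b}" "deg a = 3" "e \<in> E" unfolding T_def by auto
    hence "a < n" using edge_lt by simp
    hence "a \<in> S 3" using ab unfolding S_def by simp
    thus False using True by simp
  qed
  thus ?thesis unfolding m_def by simp
next
  case False
  define S3 where "S3 = S 3"
  then obtain s0 where s0: "s0 \<in> S3" using False by (meson ex_in_conv)
  have S3n: "S3 \<subseteq> {0..<n}" unfolding S3_def S_def by auto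
  define \<phi> where "\<phi> v = (if v \<in> S3 then s0 else v)" for v
  define Ein where "Ein = {e\<in>E. e \<subseteq> S3}"
  define Fo where "Fo = {e\<in>E. \<not> e \<subseteq> S3}"
  define F' where "F' = (\<lambda>e. \<phi> ` e) ` Fo"
  define V' where "V' = \<phi> ` {0..<n}"
  have T33: "T 3 3 \<subseteq> Ein"
  proof
    fix e assume "e \<in> T 3 3"
    then obtain a b where ab: "e = {a, b}" "deg a = 3" "deg b = 3" "e \<in> E" unfolding T_def by auto
    hence "a < n" "b < n" using edge_lt by simp_all
    hence "a \<in> S3" "b \<in> S3" using ab unfolding S3_def S_def by simp_all
    thus "e \<in> Ein" using ab unfolding Ein_def by simp
  qed
  have finFo: "finite Fo" using finE unfolding Fo_def by simp
  have cE: "card E = card Ein + card Fo"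
  proof -
    have "E = Ein \<union> Fo" "Ein \<inter> Fo = {}" unfolding Ein_def Fo_def by auto
    moreover have "finite Ein" using finE unfolding Ein_def by simp
    ultimately show ?thesis using finFo by (metis card_Un_disjoint)
  qed
  have two: "\<forall>e\<in>F'. card e = 2"
  proof
    fix e' assume "e' \<in> F'"
    then obtain e where e: "e \<in> Fo" "e' = \<phi> ` e" unfolding F'_def by auto
    have "e \<in> E" using e(1) unfolding Fo_def by simp
    then obtain a b where ab: "a \<noteq> b" "e = {a, b}" using edge by blast
    have "\<phi> a \<noteq> \<phi> b" using e(1) ab s0 unfolding Fo_def \<phi>_def by auto
    thus "card e' = 2" using e ab by simp
  qed
  have finF': "finite F'" unfolding F'_def using finFo by simp
  have path: "(\<phi> a, \<phi> b) \<in> (adj_rel F')\<^sup>*" if "(a, b) \<in> (adj_rel E)\<^sup>*" for a b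
    using that
  proof (induction rule: rtrancl_induct)
    case base thus ?case by simp
  next
    case (step y z)
    have yz: "{y, z} \<in> E" using step(2) by (simp add: adj)
    show ?case
    proof (cases "{y, z} \<subseteq> S3")
      case True
      hence "\<phi> z = \<phi> y" unfolding \<phi>_def by simp
      thus ?thesis using step(3) by simp
    next
      case False
      hence "{y, z} \<in> Fo" using yz unfolding Fo_def by simp
      hence "\<phi> ` {y, z} \<in> F'" unfolding F'_def by (rule imageI)
      hence "(\<phi> y, \<phi> z) \<in> adj_rel F'" unfolding adj_rel_def by simp
      thus ?thesis using step(3) by (rule rtrancl_into_rtrancl[rotated])
    qed
  qed
  have s0n: "s0 < n" using s0 S3n by auto
  have phis0: "\<phi> s0 = s0" unfolding \<phi>_def using s0 by simp
  have connV: "\<forall>x\<in>V'. (x, s0) \<in> (adj_rel F')\<^sup>*"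
  proof
    fix x assume "x \<in> V'"
    then obtain w where w: "w < n" "x = \<phi> w" unfolding V'_def by auto
    have "(\<phi> w, \<phi> s0) \<in> (adj_rel F')\<^sup>*" by (rule path[OF reach[OF w(1) s0n]])
    thus "(x, s0) \<in> (adj_rel F')\<^sup>*" using w phis0 by simp
  qed
  have V'eq: "V' = ({0..<n} - S3) \<union> {s0}"
  proof (intro equalityI subsetI)
    fix x assume "x \<in> V'"
    then obtain w where w: "w < n" "x = \<phi> w" unfolding V'_def by auto
    thus "x \<in> ({0..<n} - S3) \<union> {s0}" unfolding \<phi>_def by auto
  next
    fix x assume x: "x \<in> ({0..<n} - S3) \<union> {s0}"
    show "x \<in> V'"
    proof (cases "x = s0")
      case True thus ?thesis unfolding V'_def using phis0 s0n by (metis atLeastLessThan_iff image_eqI zero_le)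
    next
      case False
      hence "x < n" "x \<notin> S3" using x by auto
      hence "\<phi> x = x" unfolding \<phi>_def by simp
      thus ?thesis unfolding V'_def using \<open>x < n\<close> by (metis atLeastLessThan_iff image_eqI zero_le)
    qed
  qed
  have cV': "card V' = n - card S3 + 1"
  proof -
    have "card (({0..<n} - S3) \<union> {s0}) = card ({0..<n} - S3) + card {s0}"
      by (rule card_Un_disjoint) (use s0 in auto)
    moreover have "card ({0..<n} - S3) = n - card S3"
      using S3n by (simp add: card_Diff_subset finite_subset)
    ultimately show ?thesis unfolding V'eq by simp
  qed
  have "s0 \<in> V'" unfolding V'eq by simp
  have "card V' \<le> card F' + 1"
    by (rule tree_bound[OF _ \<open>s0 \<in> V'\<close> two finF' connV]) (simp add: V'_def)
  moreover have "card F' \<le> card Fo" unfolding F'_def using finFo by (rule card_image_le)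
  moreover have "card S3 \<le> n" using S3n by (metis card_atLeastLessThan card_mono diff_zero finite_atLeastLessThan)
  moreover have "card (T 3 3) \<le> card Ein" using T33 finE unfolding Ein_def by (intro card_mono) auto
  ultimately show ?thesis using cE cardE cV' unfolding m_def S3_def by linarith
qed

lemma lin_aux:
  fixes N x12 x13 x22 x23 x33 c12 c13 c22 c23 c33 :: real
  assumes "N = x12 + x13 + x22 + x23 + x33" "x23 = 3 * x12 + 2 * x13 - 2 * x33"
  shows "c12 * x12 + c13 * x13 + c22 * x22 + c23 * x23 + c33 * x33 = c22 * N + (c12 - 4 * c22 + 3 * c23) * x12
     + (c13 - 3 * c22 + 2 * c23) * x13 + (c22 - 2 * c23 + c33) * x33"
  unfolding assms by (simp add: algebra_simps)

lemma N13: "card (S 1) = card (S 3)"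
  using eq0 eq1 eq2 eq3 eqV m11 by linarith

lemma index_eq:
  "deg_index c12 c13 c22 c23 c33 E = c22 * n + (c12 - 4 * c22 + 3 * c23) * m 1 2
     + (c13 - 3 * c22 + 2 * c23) * m 1 3 + (c22 - 2 * c23 + c33) * m 3 3"
proof -
  have r0: "real n = real (m 1 2) + real (m 1 3) + real (m 2 2) + real (m 2 3) + real (m 3 3)"
    using arg_cong[OF eq0, of real] m11 by simp
  have e1: "real (card (S 1)) = real (m 1 2) + real (m 1 3)" using eq1 m11 by simp
  have e3: "3 * real (card (S 3)) = real (m 1 3) + real (m 2 3) + 2 * real (m 3 3)"
    using arg_cong[OF eq3, of real] by simp
  have r1: "real (m 2 3) = 3 * real (m 1 2) + 2 * real (m 1 3) - 2 * real (m 3 3)"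
    using e1 e3 N13 by linarith
  show ?thesis unfolding deg_index_def medges_T m_def[symmetric]
    by (rule lin_aux[OF r0 r1])
qed

lemma index_ge:
  fixes c12 c13 c22 c23 c33 :: real
  assumes hyp: "max 0 (- (c22 - 2 * c23 + c33)) <
         min (c12 - 4 * c22 + 3 * c23) (c13 - 3 * c22 + 2 * c23)"
  shows "c22 * n + (min (c12 - 4 * c22 + 3 * c23) (c13 - 3 * c22 + 2 * c23) - max 0 (- (c22 - 2 * c23 + c33))) * card (S 1)
     \<le> deg_index c12 c13 c22 c23 c33 E"
proof -
  define a where "a = c12 - 4 * c22 + 3 * c23"
  define b where "b = c13 - 3 * c22 + 2 * c23"
  define c where "c = c22 - 2 * c23 + c33"
  define \<mu> where "\<mu> = min a b"
  define \<delta> where "\<delta> = max 0 (- c)"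
  have N1: "real (card (S 1)) = real (m 1 2) + real (m 1 3)" using eq1 m11 by simp
  have m33: "real (m 3 3) \<le> card (S 1)" using m33 N13 by simp
  have "\<mu> * m 1 2 \<le> a * m 1 2" unfolding \<mu>_def by (intro mult_right_mono) auto
  moreover have "\<mu> * m 1 3 \<le> b * m 1 3" unfolding \<mu>_def by (intro mult_right_mono) auto
  moreover have "- \<delta> * m 3 3 \<le> c * m 3 3" unfolding \<delta>_def by (intro mult_right_mono) auto
  moreover have "\<delta> * m 3 3 \<le> \<delta> * card (S 1)" unfolding \<delta>_def by (intro mult_left_mono m33) auto
  ultimately have "(\<mu> - \<delta>) * card (S 1) \<le> a * m 1 2 + b * m 1 3 + c * m 3 3"
    unfolding N1 by (simp add: algebra_simps)
  thus ?thesis unfolding index_eq a_def[symmetric] b_def[symmetric] c_def[symmetric]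
    \<mu>_def[symmetric] \<delta>_def[symmetric] by simp
qed

lemma all_deg2:
  assumes "card (S 1) = 0" "v < n"
  shows "deg v = 2"
proof -
  have "S 1 = {}" "S 3 = {}" using assms(1) N13 finS by auto
  thus ?thesis using deg_cases[OF assms(2)] assms(2) unfolding S_def by auto
qed

end


lemma sucmod: "i < n \<Longrightarrow> Suc i mod n = (if Suc i = n then 0 else Suc i)"
  by auto

lemma cyc_eq: "cycle_graph n = (\<lambda>i. {i, Suc i mod n}) ` {0..<n}"
  unfolding cycle_graph_def by auto

lemma cyc_edge: "i < n \<Longrightarrow> {i, Suc i mod n} \<in> cycle_graph n"
  unfolding cyc_eq by auto

lemma cyc_simple: "n \<ge> 3 \<Longrightarrow> simple_graph n (cycle_graph n)"
proof -
  assume n: "n \<ge> 3"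
  show ?thesis unfolding simple_graph_def cyc_eq
  proof
    fix e assume "e \<in> (\<lambda>i. {i, Suc i mod n}) ` {0..<n}"
    then obtain i where i: "i < n" "e = {i, Suc i mod n}" by auto
    have "i \<noteq> Suc i mod n" "Suc i mod n < n" using i n by (auto simp: sucmod)
    thus "\<exists>u v. u \<noteq> v \<and> u < n \<and> v < n \<and> e = {u, v}" using i by blast
  qed
qed

lemma cyc_conn: assumes "n \<ge> 3" shows "graph_connected n (cycle_graph n)"
proof -
  let ?R = "adj_rel (cycle_graph n)"
  have fw: "(0, v) \<in> ?R\<^sup>* \<and> (v, 0) \<in> ?R\<^sup>*" if "v < n" for v
    using that
  proof (induction v)
    case 0 thus ?case by simp
  next
    case (Suc v)
    have "{v, Suc v mod n} \<in> cycle_graph n" using Suc.prems by (intro cyc_edge) simp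
    hence e: "{v, Suc v} \<in> cycle_graph n" using Suc.prems by simp
    hence "(v, Suc v) \<in> ?R" "(Suc v, v) \<in> ?R" unfolding adj_rel_def by (simp_all add: insert_commute)
    moreover have "(0, v) \<in> ?R\<^sup>*" "(v, 0) \<in> ?R\<^sup>*" using Suc by simp_all
    ultimately show ?case by (meson rtrancl_into_rtrancl converse_rtrancl_into_rtrancl)
  qed
  show ?thesis unfolding graph_connected_def
  proof (intro allI impI)
    fix u v assume "u < n" "v < n"
    with fw have "(u, 0) \<in> ?R\<^sup>*" "(0, v) \<in> ?R\<^sup>*" by auto
    thus "(u, v) \<in> ?R\<^sup>*" by (rule rtrancl_trans)
  qed
qed

lemma cyc_card: assumes "n \<ge> 3" shows "card (cycle_graph n) = n"
proof -
  have "inj_on (\<lambda>i. {i, Suc i mod n}) {0..<n}"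
  proof (rule inj_onI)
    fix i j assume i: "i \<in> {0..<n}" and j: "j \<in> {0..<n}" and eq: "{i, Suc i mod n} = {j, Suc j mod n}"
    show "i = j"
    proof (rule ccontr)
      assume ne: "i \<noteq> j"
      with eq have "i = Suc j mod n" "j = Suc i mod n" by (auto simp: doubleton_eq_iff)
      thus False using i j assms ne by (auto simp: sucmod split: if_splits)
    qed
  qed
  thus ?thesis unfolding cyc_eq by (simp add: card_image)
qed

lemma cyc_deg: assumes "n \<ge> 3" "v < n" shows "vdeg (cycle_graph n) v = 2"
proof -
  define p where "p = (if v = 0 then n - 1 else v - 1)"
  have p: "p < n" "Suc p mod n = v" using assms unfolding p_def by (auto simp: sucmod)
  have "{e \<in> cycle_graph n. v \<in> e} = {{v, Suc v mod n}, {p, v}}"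
  proof (intro equalityI subsetI)
    fix e assume "e \<in> {e \<in> cycle_graph n. v \<in> e}"
    then obtain i where i: "i < n" "e = {i, Suc i mod n}" "v \<in> e" unfolding cyc_eq by auto
    show "e \<in> {{v, Suc v mod n}, {p, v}}"
    proof (cases "v = i")
      case True thus ?thesis using i by simp
    next
      case False
      hence "v = Suc i mod n" using i by simp
      hence "i = p" using i assms unfolding p_def by (auto simp: sucmod split: if_splits)
      thus ?thesis using i \<open>v = Suc i mod n\<close> by auto
    qed
  next
    fix e assume "e \<in> {{v, Suc v mod n}, {p, v}}"
    moreover have "{v, Suc v mod n} \<in> cycle_graph n" using assms by (intro cyc_edge)
    moreover have "{p, v} \<in> cycle_graph n" using cyc_edge[OF p(1)] p(2) by simp
    ultimately show "e \<in> {e \<in> cycle_graph n. v \<in> e}" by auto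
  qed
  moreover have "{v, Suc v mod n} \<noteq> {p, v}"
  proof
    assume "{v, Suc v mod n} = {p, v}"
    hence "Suc v mod n = p \<or> (v = p \<and> Suc v mod n = v)" by (auto simp: doubleton_eq_iff)
    thus False using assms unfolding p_def by (auto simp: sucmod split: if_splits)
  qed
  ultimately show ?thesis unfolding vdeg_def by simp
qed

lemma cyc_G3: "n \<ge> 3 \<Longrightarrow> cycle_graph n \<in> G3 n n"
  unfolding G3_def using cyc_simple cyc_conn cyc_card cyc_deg by simp



primrec wk :: "(nat \<Rightarrow> nat \<Rightarrow> nat) \<Rightarrow> nat \<Rightarrow> nat \<times> nat" where
  "wk f 0 = (0, f 0 0)"
| "wk f (Suc k) = (snd (wk f k), f (fst (wk f k)) (snd (wk f k)))"

locale ug2 = ug +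
  assumes d2: "\<forall>v<n. vdeg E v = 2"
begin

lemma other: assumes "e \<in> E" "a \<in> e" shows "\<exists>b. e = {a, b}"
proof -
  obtain u v where uv: "e = {u, v}" using edge[OF assms(1)] by blast
  show ?thesis
  proof (cases "a = u")
    case True thus ?thesis using uv by blast
  next
    case False
    hence "a = v" using uv assms(2) by simp
    thus ?thesis using uv by (metis insert_commute)
  qed
qed

lemma nb_ex: assumes "a < n" shows "\<exists>b. {a, b} \<in> E \<and> b \<noteq> p"
proof -
  have "card {e\<in>E. a \<in> e} = 2" using d2 assms unfolding vdeg_def by simp
  then obtain e1 e2 where e: "{e\<in>E. a \<in> e} = {e1, e2}" "e1 \<noteq> e2" by (meson card_2_iff)
  have "e1 \<in> E" "a \<in> e1" "e2 \<in> E" "a \<in> e2" using e(1) by blast+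
  then obtain b1 b2 where b: "e1 = {a, b1}" "e2 = {a, b2}" using other by meson
  have "b1 \<noteq> b2" using b e(2) by auto
  hence "b1 \<noteq> p \<or> b2 \<noteq> p" by auto
  thus ?thesis using b \<open>e1 \<in> E\<close> \<open>e2 \<in> E\<close> by auto
qed

lemma nb2:
  assumes "a < n" "{a, b} \<in> E" "{a, c} \<in> E" "b \<noteq> c" "{a, d} \<in> E"
  shows "d = b \<or> d = c"
proof (rule ccontr)
  assume "\<not> (d = b \<or> d = c)"
  hence "d \<noteq> b" "d \<noteq> c" by auto
  have "a \<noteq> b" "a \<noteq> c" "a \<noteq> d" using edge_ne[OF assms(2)] edge_ne[OF assms(3)] edge_ne[OF assms(5)] by simp_all
  have ne: "{a, b} \<noteq> {a, c}" "{a, b} \<noteq> {a, d}" "{a, c} \<noteq> {a, d}"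
    using \<open>d \<noteq> b\<close> \<open>d \<noteq> c\<close> assms(4) \<open>a \<noteq> b\<close> \<open>a \<noteq> c\<close> \<open>a \<noteq> d\<close> by (auto simp: doubleton_eq_iff)
  have "{{a, b}, {a, c}, {a, d}} \<subseteq> {e\<in>E. a \<in> e}" using assms(2,3,5) by simp
  hence "card {{a, b}, {a, c}, {a, d}} \<le> card {e\<in>E. a \<in> e}" using finE by (intro card_mono) simp_all
  moreover have "card {{a, b}, {a, c}, {a, d}} = 3" using ne by (simp add: card_insert_if)
  moreover have "card {e\<in>E. a \<in> e} = 2" using d2 assms unfolding vdeg_def by simp
  ultimately show False by simp
qed

definition nxt :: "nat \<Rightarrow> nat \<Rightarrow> nat" where "nxt p c = (SOME y. {c, y} \<in> E \<and> y \<noteq> p)"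

lemma nxt: "c < n \<Longrightarrow> {c, nxt p c} \<in> E \<and> nxt p c \<noteq> p"
  unfolding nxt_def by (rule someI_ex) (rule nb_ex)

definition x :: "nat \<Rightarrow> nat" where "x k = fst (wk nxt k)"

lemma x0: "x 0 = 0" unfolding x_def by simp
lemma x1: "x (Suc 0) = nxt 0 0" unfolding x_def by simp
lemma xss: "x (Suc (Suc k)) = nxt (x k) (x (Suc k))" unfolding x_def by simp

lemma xedge: "{x k, x (Suc k)} \<in> E"
proof (induction k)
  case 0
  have "0 < n" using n3 by simp
  thus ?case using nxt[of 0 0] x0 x1 by simp
next
  case (Suc k)
  have "x (Suc k) < n" using edge_lt[OF Suc.IH] by simp
  thus ?case using nxt[of "x (Suc k)" "x k"] xss by simp
qed

lemma xlt: "x k < n" using edge_lt[OF xedge[of k]] by simp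

lemma xback: "x (Suc (Suc k)) \<noteq> x k" using nxt[OF xlt[of "Suc k"], of "x k"] xss by simp

lemma xne: "x (Suc k) \<noteq> x k" using edge_ne[OF xedge[of k]] by simp

definition K where "K = (LEAST k. \<exists>j<k. x j = x k)"

lemma exrep: "\<exists>k. \<exists>j<k. x j = x k"
proof (rule ccontr)
  assume h: "\<not> ?thesis"
  have "inj_on x {0..<Suc n}"
  proof (rule inj_onI)
    fix i j assume "i \<in> {0..<Suc n}" "j \<in> {0..<Suc n}" "x i = x j"
    thus "i = j" using h by (metis linorder_neqE_nat)
  qed
  hence "card (x ` {0..<Suc n}) = Suc n" by (simp add: card_image)
  moreover have "x ` {0..<Suc n} \<subseteq> {0..<n}" using xlt by auto
  hence "card (x ` {0..<Suc n}) \<le> n" by (metis card_atLeastLessThan card_mono diff_zero finite_atLeastLessThan)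
  ultimately show False by simp
qed

lemma Krep: "\<exists>j<K. x j = x K"
  unfolding K_def by (rule LeastI_ex) (rule exrep)

lemma Kinj: assumes "i < K" "j < K" "x i = x j" shows "i = j"
proof (rule ccontr)
  assume "i \<noteq> j"
  then consider "i < j" | "j < i" by linarith
  thus False
  proof cases
    case 1
    have "\<not> (\<exists>j'<j. x j' = x j)" using assms(2) unfolding K_def by (rule not_less_Least)
    thus False using 1 assms(3) by blast
  next
    case 2
    have "\<not> (\<exists>j'<i. x j' = x i)" using assms(1) unfolding K_def by (rule not_less_Least)
    thus False using 2 assms(3) by metis
  qed
qed

lemma KxK0: "x K = x 0 \<and> K \<ge> 3"
proof -
  obtain j where j: "j < K" "x j = x K" using Krep by blast
  have "j \<noteq> K - 1"
  proof
    assume "j = K - 1"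
    hence "K = Suc j" using j by simp
    thus False using j xne[of j] by simp
  qed
  hence jK: "Suc j < K" using j by simp
  have j0: "j = 0"
  proof (rule ccontr)
    assume "j \<noteq> 0"
    then obtain i where i: "j = Suc i" by (metis not0_implies_Suc)
    obtain L where L: "K = Suc L" using j by (metis less_imp_Suc_add)
    have a: "{x j, x i} \<in> E" using xedge[of i] i by (simp add: insert_commute)
    have b: "{x j, x (Suc j)} \<in> E" by (rule xedge)
    have c: "{x j, x L} \<in> E" using xedge[of L] L j(2) by (simp add: insert_commute)
    have ne: "x i \<noteq> x (Suc j)"
    proof
      assume "x i = x (Suc j)"
      hence "i = Suc j" using Kinj[of i "Suc j"] jK i by simp
      thus False using i by simp
    qed
    have "x L = x i \<or> x L = x (Suc j)" by (rule nb2[OF xlt a b ne c])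
    moreover have "L < K" "i < K" using L i j by simp_all
    ultimately have "L = i \<or> L = Suc j" using Kinj jK by blast
    moreover have "L \<noteq> i" using L i j by simp
    ultimately have "L = Suc j" by simp
    hence "x (Suc (Suc j)) = x j" using L j(2) by simp
    thus False using xback by simp
  qed
  have "K \<noteq> 1" using j j0 xne[of 0] by auto
  moreover have "K \<noteq> 2" using j j0 xback[of 0] by (metis numeral_2_eq_2)
  ultimately have "K \<ge> 3" using jK j0 by linarith
  thus ?thesis using j j0 by simp
qed

lemma closed: assumes "i < K" "{x i, b} \<in> E" shows "b \<in> x ` {0..<K}"
proof -
  have K3: "K \<ge> 3" and xK: "x K = x 0" using KxK0 by auto
  define li where "li = (if i = 0 then K - 1 else i - 1)"
  define ri where "ri = (if Suc i = K then 0 else Suc i)"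
  have lK: "li < K" "ri < K" using assms K3 unfolding li_def ri_def by auto
  have lr: "li \<noteq> ri" using assms K3 unfolding li_def ri_def by auto
  have el: "{x i, x li} \<in> E"
  proof (cases "i = 0")
    case True
    have "{x (K - 1), x (Suc (K - 1))} \<in> E" by (rule xedge)
    moreover have "Suc (K - 1) = K" using K3 by simp
    ultimately show ?thesis using True xK unfolding li_def by (simp add: insert_commute)
  next
    case False
    have "{x (i - 1), x (Suc (i - 1))} \<in> E" by (rule xedge)
    moreover have "Suc (i - 1) = i" using False by simp
    ultimately show ?thesis using False unfolding li_def by (simp add: insert_commute)
  qed
  have er: "{x i, x ri} \<in> E"
    using xedge[of i] xK unfolding ri_def by (cases "Suc i = K") simp_all
  have "x li \<noteq> x ri" using Kinj lK lr by blast
  hence "b = x li \<or> b = x ri" by (rule nb2[OF xlt el er _ assms(2)])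
  thus ?thesis using lK by auto
qed

lemma Kn: "K = n" and ximg: "x ` {0..<n} = {0..<n}" and xinj: "inj_on x {0..<n}"
proof -
  have sub1: "{0..<n} \<subseteq> x ` {0..<K}"
  proof
    fix v assume "v \<in> {0..<n}"
    hence "(0, v) \<in> (adj_rel E)\<^sup>*" using reach n3 by simp
    thus "v \<in> x ` {0..<K}"
    proof (induction rule: rtrancl_induct)
      case base
      have "0 < K" using KxK0 by simp
      thus ?case using x0 by (metis atLeastLessThan_iff image_eqI zero_le)
    next
      case (step y z)
      then obtain i where i: "i < K" "y = x i" by auto
      have "{x i, z} \<in> E" using step(2) i by (simp add: adj)
      thus ?case by (rule closed[OF i(1)])
    qed
  qed
  have injK: "inj_on x {0..<K}" using Kinj by (intro inj_onI) auto
  have sub2: "x ` {0..<K} \<subseteq> {0..<n}" using xlt by auto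
  have "n \<le> card (x ` {0..<K})" using sub1 by (metis card_atLeastLessThan card_mono diff_zero finite_imageI finite_atLeastLessThan)
  moreover have "card (x ` {0..<K}) = K" using injK by (simp add: card_image)
  moreover have "card (x ` {0..<K}) \<le> n" using sub2 by (metis card_atLeastLessThan card_mono diff_zero finite_atLeastLessThan)
  ultimately show Kn: "K = n" by simp
  show "x ` {0..<n} = {0..<n}" using sub1 sub2 Kn by auto
  show "inj_on x {0..<n}" using injK Kn by simp
qed

lemma cyc_edges: assumes "i < n" shows "{x i, x (Suc i mod n)} \<in> E"
proof (cases "Suc i = n")
  case True
  have "x n = x 0" using KxK0 Kn by simp
  thus ?thesis using xedge[of i] True by simp
next
  case False
  thus ?thesis using xedge[of i] assms by simp
qed

lemma iso: "graph_iso n E (cycle_graph n)"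
proof -
  let ?C = "cycle_graph n"
  define f where "f = inv_into {0..<n} x"
  have bx: "bij_betw x {0..<n} {0..<n}" using xinj ximg by (simp add: bij_betw_def)
  have bf: "bij_betw f {0..<n} {0..<n}" unfolding f_def by (rule bij_betw_inv_into[OF bx])
  have Csub: "?C \<subseteq> Pow {0..<n}" unfolding cyc_eq by (auto simp: sucmod)
  have injP: "inj_on (image x) (Pow {0..<n})" by (rule inj_on_image_Pow[OF xinj])
  have gC: "image x ` ?C \<subseteq> E"
  proof
    fix e assume "e \<in> image x ` ?C"
    then obtain k where k: "k < n" "e = x ` {k, Suc k mod n}" unfolding cyc_eq by auto
    thus "e \<in> E" using cyc_edges[OF k(1)] by simp
  qed
  have "card (image x ` ?C) = card ?C"
    using injP Csub by (intro card_image) (rule inj_on_subset)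
  hence "card (image x ` ?C) = card E" using cyc_card n3 cardE by simp
  hence gCE: "image x ` ?C = E" using gC finE by (intro card_subset_eq) auto
  have key: "{x i, x j} \<in> E \<longleftrightarrow> {i, j} \<in> ?C" if "i < n" "j < n" for i j
  proof
    assume "{i, j} \<in> ?C"
    hence "x ` {i, j} \<in> E" using gC by auto
    thus "{x i, x j} \<in> E" by simp
  next
    assume "{x i, x j} \<in> E"
    hence "{x i, x j} \<in> image x ` ?C" by (simp only: gCE)
    then obtain e where e: "e \<in> ?C" "x ` e = {x i, x j}" by (elim imageE) simp
    have "x ` e = x ` {i, j}" using e by simp
    moreover have "e \<in> Pow {0..<n}" "{i, j} \<in> Pow {0..<n}" using e Csub that by auto
    ultimately have "e = {i, j}" using injP by (meson inj_onD)
    thus "{i, j} \<in> ?C" using e by simp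
  qed
  show ?thesis unfolding graph_iso_def
  proof (intro exI conjI allI impI)
    show "bij_betw f {0..<n} {0..<n}" by (rule bf)
    fix u v assume u: "u < n" and v: "v < n"
    have fu: "f u < n" "x (f u) = u" using u bx bf unfolding f_def
      by (auto simp: bij_betw_def f_inv_into_f inv_into_into)
    have fv: "f v < n" "x (f v) = v" using v bx bf unfolding f_def
      by (auto simp: bij_betw_def f_inv_into_f inv_into_into)
    show "{u, v} \<in> E \<longleftrightarrow> {f u, f v} \<in> ?C" using key[OF fu(1) fv(1)] fu fv by simp
  qed
qed

end

context ug begin
lemma index_deg2:
  assumes "\<forall>v<n. deg v = 2"
  shows "deg_index c12 c13 c22 c23 c33 E = c22 * n"
proof -
  have T0: "T i j = {}" if "i \<noteq> 2" for i j
  proof (rule ccontr)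
    assume "T i j \<noteq> {}"
    then obtain e where "e \<in> T i j" by (meson ex_in_conv)
    then obtain a b where ab: "e = {a, b}" "deg a = i" "e \<in> E" unfolding T_def by auto
    hence "a < n" using edge_lt by simp
    thus False using assms ab that by simp
  qed
  have "m 1 2 = 0" "m 1 3 = 0" "m 3 3 = 0" unfolding m_def using T0 by simp_all
  thus ?thesis using index_eq by simp
qed
end

theorem theorem2:
  fixes n :: nat and c12 c13 c22 c23 c33 :: real
  assumes "n \<ge> 3"
    and "max 0 (- (c22 - 2 * c23 + c33)) <
         min (c12 - 4 * c22 + 3 * c23) (c13 - 3 * c22 + 2 * c23)"
  shows "cycle_graph n \<in> G3 n n \<and>
         (\<forall>E\<in>G3 n n. deg_index c12 c13 c22 c23 c33 (cycle_graph n) \<le> deg_index c12 c13 c22 c23 c33 E) \<and>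
         (\<forall>E\<in>G3 n n. deg_index c12 c13 c22 c23 c33 E = deg_index c12 c13 c22 c23 c33 (cycle_graph n)
              \<longrightarrow> graph_iso n E (cycle_graph n))"
proof -
  have CG: "cycle_graph n \<in> G3 n n" using cyc_G3 assms(1) .
  have ugI: "ug n F" if "F \<in> G3 n n" for F
    using that assms(1) unfolding G3_def ug_def by auto
  have IC: "deg_index c12 c13 c22 c23 c33 (cycle_graph n) = c22 * n"
  proof -
    interpret ug n "cycle_graph n" by (rule ugI[OF CG])
    show ?thesis by (rule index_deg2) (use cyc_deg assms(1) in simp)
  qed
  define \<gamma> where "\<gamma> = min (c12 - 4 * c22 + 3 * c23) (c13 - 3 * c22 + 2 * c23) - max 0 (- (c22 - 2 * c23 + c33))"
  have gpos: "\<gamma> > 0" using assms(2) unfolding \<gamma>_def by simp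
  have main: "c22 * n + \<gamma> * card (ug.S n F 1) \<le> deg_index c12 c13 c22 c23 c33 F" if "F \<in> G3 n n" for F
  proof -
    interpret ug n F by (rule ugI[OF that])
    show ?thesis unfolding \<gamma>_def by (rule index_ge[OF assms(2)])
  qed
  have part2: "\<forall>E\<in>G3 n n. deg_index c12 c13 c22 c23 c33 (cycle_graph n) \<le> deg_index c12 c13 c22 c23 c33 E"
  proof
    fix F assume F: "F \<in> G3 n n"
    have "0 \<le> \<gamma> * card (ug.S n F 1)" using gpos by simp
    thus "deg_index c12 c13 c22 c23 c33 (cycle_graph n) \<le> deg_index c12 c13 c22 c23 c33 F"
      using main[OF F] IC by linarith
  qed
  have part3: "\<forall>E\<in>G3 n n. deg_index c12 c13 c22 c23 c33 E = deg_index c12 c13 c22 c23 c33 (cycle_graph n)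
              \<longrightarrow> graph_iso n E (cycle_graph n)"
  proof (intro ballI impI)
    fix F assume F: "F \<in> G3 n n" and eq: "deg_index c12 c13 c22 c23 c33 F = deg_index c12 c13 c22 c23 c33 (cycle_graph n)"
    interpret ug n F by (rule ugI[OF F])
    have "\<gamma> * card (S 1) \<le> 0" using main[OF F] eq IC by linarith
    hence "card (S 1) = 0" using gpos by (simp add: mult_le_0_iff)
    hence d2: "\<forall>v<n. vdeg F v = 2" using all_deg2 by blast
    interpret ug2 n F by unfold_locales (rule d2)
    show "graph_iso n F (cycle_graph n)" by (rule iso)
  qed
  show ?thesis using CG part2 part3 by blast
qed

end
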